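(* Let $k\ge1$ be an integer, $p_{\max}\in(0,1)$ and $\lambda_k>0$. Let items $X_i\sim\operatorname{Ber}(p_i,s_i)$ with $s_i\in\left(\frac{1}{k+1},\frac1k\right]$, $p_i\in(0,p_{\max}]$ and $\frac{1}{\lambda_k}\ln\frac{1}{1-p_i}\le1$ be packed, in order, by an Any-Fit algorithm applied to the real values $\frac{1}{\lambda_k}\ln\frac{1}{1-p_i}$ (bins of capacity 1), producing bins $\mathcal{B}_1,\dots,\mathcal{B}_m$ with $m\ge2$. Then $\frac1m\sum_{j=1}^m\sum_{i\in\mathcal{B}_j}p_is_i>\frac{\lambda_k(1-p_{\max})}{2(k+1)}$.
   Context: $X\sim\operatorname{Ber}(p,s)$ means $X=s$ with probability $p$ and $0$ otherwise. An Any-Fit algorithm processes real values in $[0,1]$ one by one, keeps every bin's total at most $1$, and opens a new bin only if the current value fits into no already opened bin. *)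

theory Defs
  imports Complex_Main
begin

text \<open>Items are indexed 0,...,n-1 and processed in this order.  v i is the real
value of item i; b i is the (label of the) bin item i is put into.  Bins are the
non-empty classes of b on {..<n}.\<close>

definition bin_load_before :: "(nat \<Rightarrow> real) \<Rightarrow> (nat \<Rightarrow> nat) \<Rightarrow> nat \<Rightarrow> nat \<Rightarrow> real" where
  "bin_load_before v b j i = (\<Sum>l\<in>{l. l < i \<and> b l = j}. v l)"

definition any_fit :: "nat \<Rightarrow> (nat \<Rightarrow> real) \<Rightarrow> (nat \<Rightarrow> nat) \<Rightarrow> bool" where
  "any_fit n v b \<longleftrightarrow>
     (\<forall>i<n.
        (b i \<in> b ` {..<i} \<longrightarrow> bin_load_before v b (b i) i + v i \<le> 1) \<and>
        (b i \<notin> b ` {..<i} \<longrightarrow> v i \<le> 1 \<and>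
             (\<forall>j\<in>b ` {..<i}. bin_load_before v b j i + v i > 1)))"

end

theory Submission
  imports Defs
begin

lemma item_bound:
  fixes p s lam pmax :: real and k :: nat
  assumes "lam > 0" "0 < p" "p \<le> pmax" "pmax < 1" "1 / real (k+1) < s"
  shows "lam * (1 - pmax) / real (k+1) * ((1/lam) * ln (1/(1-p))) \<le> p * s"
    and "0 \<le> (1/lam) * ln (1/(1-p))"
proof -
  have p1: "1 - p > 0" using assms by linarith
  have l: "ln (1/(1-p)) \<le> 1/(1-p) - 1" by (rule ln_le_minus_one) (use p1 in simp)
  have "1/(1-p) - 1 = p/(1-p)" using p1 by (simp add: field_simps)
  hence l2: "ln (1/(1-p)) \<le> p/(1-p)" using l by simp
  have l0: "0 \<le> ln (1/(1-p))" using p1 assms by simp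
  show "0 \<le> (1/lam) * ln (1/(1-p))" using l0 assms by simp
  have "(1 - pmax) * ln (1/(1-p)) \<le> (1-pmax) * (p/(1-p))"
    using l2 assms by (intro mult_left_mono) auto
  also have "\<dots> \<le> (1-p) * (p/(1-p))"
    using assms by (intro mult_right_mono) auto
  also have "\<dots> = p" using p1 by simp
  finally have A: "(1 - pmax) * ln (1/(1-p)) \<le> p" .
  have "lam * (1 - pmax) / real (k+1) * ((1/lam) * ln (1/(1-p)))
        = ((1 - pmax) * ln (1/(1-p))) * (1 / real (k+1))" using assms by simp
  also have "\<dots> \<le> p * (1 / real (k+1))"
    using A by (intro mult_right_mono) auto
  also have "\<dots> \<le> p * s" using assms by (intro mult_left_mono) auto
  finally show "lam * (1 - pmax) / real (k+1) * ((1/lam) * ln (1/(1-p))) \<le> p * s" .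
qed

lemma pair_bound:
  fixes v :: "nat \<Rightarrow> real" and b :: "nat \<Rightarrow> nat"
  assumes af: "any_fit n v b" and nn: "\<And>i. i < n \<Longrightarrow> 0 \<le> v i"
    and j: "j \<in> b ` {..<n}" and j': "j' \<in> b ` {..<n}" and ne: "j \<noteq> j'"
    and ord: "(LEAST i. i < n \<and> b i = j) < (LEAST i. i < n \<and> b i = j')"
  shows "(\<Sum>i\<in>{i. i < n \<and> b i = j}. v i) + (\<Sum>i\<in>{i. i < n \<and> b i = j'}. v i) > 1"
proof -
  define f where "f = (LEAST i. i < n \<and> b i = j)"
  define g where "g = (LEAST i. i < n \<and> b i = j')"
  obtain x where x: "x < n" "b x = j" using j by auto
  obtain y where y: "y < n" "b y = j'" using j' by auto
  have fP: "f < n \<and> b f = j" unfolding f_def by (rule LeastI[of _ x]) (use x in simp)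
  have gP: "g < n \<and> b g = j'" unfolding g_def by (rule LeastI[of _ y]) (use y in simp)
  have fg: "f < g" using ord f_def g_def by simp
  have gmin: "\<And>i. i < g \<Longrightarrow> b i \<noteq> j'"
  proof -
    fix i assume "i < g"
    hence "\<not> (i < n \<and> b i = j')" unfolding g_def using not_less_Least by blast
    thus "b i \<noteq> j'" using \<open>i < g\<close> gP by auto
  qed
  have notin: "b g \<notin> b ` {..<g}"
  proof
    assume "b g \<in> b ` {..<g}"
    then obtain i where i: "i < g" "b i = b g" by auto
    have "b i \<noteq> j'" using gmin[OF i(1)] .
    thus False using i(2) gP by simp
  qed
  have jin: "j \<in> b ` {..<g}" using fP fg by auto
  have "b g \<notin> b ` {..<g} \<longrightarrow> v g \<le> 1 \<and>
             (\<forall>j\<in>b ` {..<g}. bin_load_before v b j g + v g > 1)"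
    using af gP unfolding any_fit_def by blast
  hence "\<forall>j\<in>b ` {..<g}. bin_load_before v b j g + v g > 1" using notin by blast
  hence "bin_load_before v b j g + v g > 1" using jin by blast
  moreover have "bin_load_before v b j g \<le> (\<Sum>i\<in>{i. i < n \<and> b i = j}. v i)"
    unfolding bin_load_before_def
  proof (rule sum_mono2)
    show "finite {i. i < n \<and> b i = j}" by simp
    show "{l. l < g \<and> b l = j} \<subseteq> {i. i < n \<and> b i = j}" using gP by auto
    show "\<And>a. a \<in> {i. i < n \<and> b i = j} - {l. l < g \<and> b l = j} \<Longrightarrow> 0 \<le> v a" using nn by auto
  qed
  moreover have "v g \<le> (\<Sum>i\<in>{i. i < n \<and> b i = j'}. v i)"
  proof -
    have "v g = (\<Sum>i\<in>{g}. v i)" by simp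
    also have "\<dots> \<le> (\<Sum>i\<in>{i. i < n \<and> b i = j'}. v i)"
    proof (rule sum_mono2)
      show "finite {i. i < n \<and> b i = j'}" by simp
      show "{g} \<subseteq> {i. i < n \<and> b i = j'}" using gP by auto
      show "\<And>a. a \<in> {i. i < n \<and> b i = j'} - {g} \<Longrightarrow> 0 \<le> v a" using nn by auto
    qed
    finally show ?thesis .
  qed
  ultimately show ?thesis by linarith
qed

lemma pair_bound2:
  fixes v :: "nat \<Rightarrow> real" and b :: "nat \<Rightarrow> nat"
  assumes af: "any_fit n v b" and nn: "\<And>i. i < n \<Longrightarrow> 0 \<le> v i"
    and j: "j \<in> b ` {..<n}" and j': "j' \<in> b ` {..<n}" and ne: "j \<noteq> j'"
  shows "(\<Sum>i\<in>{i. i < n \<and> b i = j}. v i) + (\<Sum>i\<in>{i. i < n \<and> b i = j'}. v i) > 1"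
proof -
  define f where "f = (LEAST i. i < n \<and> b i = j)"
  define g where "g = (LEAST i. i < n \<and> b i = j')"
  obtain x where x: "x < n" "b x = j" using j by auto
  obtain y where y: "y < n" "b y = j'" using j' by auto
  have fP: "f < n \<and> b f = j" unfolding f_def by (rule LeastI[of _ x]) (use x in simp)
  have gP: "g < n \<and> b g = j'" unfolding g_def by (rule LeastI[of _ y]) (use y in simp)
  have "f \<noteq> g" using fP gP ne by auto
  hence "f < g \<or> g < f" by linarith
  thus ?thesis
  proof
    assume "f < g"
    thus ?thesis using pair_bound[OF af nn j j' ne] unfolding f_def g_def by blast
  next
    assume "g < f"
    hence "(\<Sum>i\<in>{i. i < n \<and> b i = j'}. v i) + (\<Sum>i\<in>{i. i < n \<and> b i = j}. v i) > 1"
      using pair_bound[OF af nn j' j ne[symmetric]] unfolding f_def g_def by blast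
    thus ?thesis by linarith
  qed
qed

lemma sum_half:
  fixes L :: "nat \<Rightarrow> real" and B :: "nat set"
  assumes fin: "finite B" and m: "card B \<ge> 2"
    and pb: "\<And>j j'. j \<in> B \<Longrightarrow> j' \<in> B \<Longrightarrow> j \<noteq> j' \<Longrightarrow> L j + L j' > 1"
  shows "2 * (\<Sum>j\<in>B. L j) > real (card B)"
proof -
  define S where "S = (\<Sum>j\<in>B. L j)"
  define M where "M = real (card B)"
  have M2: "M \<ge> 2" unfolding M_def using m by simp
  have Bne: "B \<noteq> {}" using m by auto
  have cd: "\<And>j. j \<in> B \<Longrightarrow> real (card (B - {j})) = M - 1"
  proof -
    fix j assume "j \<in> B"
    hence "card (B - {j}) = card B - 1" using fin by simp
    moreover have "card B \<ge> 1" using m by simp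
    ultimately show "real (card (B - {j})) = M - 1" unfolding M_def by simp
  qed
  have ne: "\<And>j. j \<in> B \<Longrightarrow> B - {j} \<noteq> {}"
  proof -
    fix j assume jB: "j \<in> B"
    have "real (card (B - {j})) \<ge> 1" using cd[OF jB] M2 by simp
    thus "B - {j} \<noteq> {}" by (metis card.empty of_nat_0 not_one_le_zero)
  qed
  have "(\<Sum>j\<in>B. \<Sum>j'\<in>B-{j}. (1::real)) < (\<Sum>j\<in>B. \<Sum>j'\<in>B-{j}. L j + L j')"
  proof (rule sum_strict_mono[OF fin Bne])
    fix j assume jB: "j \<in> B"
    show "(\<Sum>j'\<in>B-{j}. (1::real)) < (\<Sum>j'\<in>B-{j}. L j + L j')"
    proof (rule sum_strict_mono)
      show "finite (B - {j})" using fin by simp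
      show "B - {j} \<noteq> {}" using ne[OF jB] .
      fix j' assume "j' \<in> B - {j}"
      hence "j' \<in> B" "j \<noteq> j'" by auto
      thus "1 < L j + L j'" using pb[OF jB] by blast
    qed
  qed
  also have "(\<Sum>j\<in>B. \<Sum>j'\<in>B-{j}. L j + L j') = (\<Sum>j\<in>B. (M - 1) * L j + (S - L j))"
  proof (rule sum.cong[OF refl])
    fix j assume jB: "j \<in> B"
    have "(\<Sum>j'\<in>B-{j}. L j + L j') = (\<Sum>j'\<in>B-{j}. L j) + (\<Sum>j'\<in>B-{j}. L j')"
      by (rule sum.distrib)
    also have "(\<Sum>j'\<in>B-{j}. L j) = real (card (B - {j})) * L j" by simp
    also have "(\<Sum>j'\<in>B-{j}. L j') = S - L j"
      unfolding S_def using fin jB by (simp add: sum_diff1)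
    finally show "(\<Sum>j'\<in>B-{j}. L j + L j') = (M - 1) * L j + (S - L j)" using cd[OF jB] by simp
  qed
  also have "\<dots> = (M - 1) * S + M * S - S"
  proof -
    have "(\<Sum>j\<in>B. (M - 1) * L j + (S - L j)) = (\<Sum>j\<in>B. (M - 1) * L j) + (\<Sum>j\<in>B. (S - L j))"
      by (rule sum.distrib)
    also have "(\<Sum>j\<in>B. (M - 1) * L j) = (M - 1) * S" unfolding S_def by (rule sum_distrib_left[symmetric])
    also have "(\<Sum>j\<in>B. (S - L j)) = (\<Sum>j\<in>B. S) - S" unfolding S_def by (rule sum_subtractf)
    also have "(\<Sum>j\<in>B. S) = M * S" unfolding M_def by simp
    finally show ?thesis by simp
  qed
  finally have X: "(\<Sum>j\<in>B. \<Sum>j'\<in>B-{j}. (1::real)) < (M - 1) * S + M * S - S" .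
  have "(\<Sum>j\<in>B. \<Sum>j'\<in>B-{j}. (1::real)) = (\<Sum>j\<in>B. M - 1)"
  proof (rule sum.cong[OF refl])
    fix j assume jB: "j \<in> B"
    have "(\<Sum>j'\<in>B-{j}. (1::real)) = real (card (B-{j})) * 1" by (rule sum_constant)
    thus "(\<Sum>j'\<in>B-{j}. (1::real)) = M - 1" using cd[OF jB] by simp
  qed
  also have "\<dots> = M * (M - 1)" unfolding M_def by simp
  finally have "M * (M - 1) < (M - 1) * S + M * S - S" using X by simp
  hence "(M - 1) * M < (M - 1) * (2 * S)" by (simp add: algebra_simps)
  moreover have "M - 1 > 0" using M2 by simp
  ultimately have "M < 2 * S" using mult_less_cancel_left_pos by blast
  thus ?thesis unfolding M_def S_def .
qed

theorem lemma9:
  fixes k :: nat and pmax lam :: real and n :: nat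
    and p s :: "nat \<Rightarrow> real" and b :: "nat \<Rightarrow> nat"
  assumes "k \<ge> 1" and "0 < pmax" and "pmax < 1" and "lam > 0"
    and "\<And>i. i < n \<Longrightarrow> 1 / real (k + 1) < s i \<and> s i \<le> 1 / real k"
    and "\<And>i. i < n \<Longrightarrow> 0 < p i \<and> p i \<le> pmax"
    and "\<And>i. i < n \<Longrightarrow> (1 / lam) * ln (1 / (1 - p i)) \<le> 1"
    and "any_fit n (\<lambda>i. (1 / lam) * ln (1 / (1 - p i))) b"
    and "m = card (b ` {..<n})"
    and "m \<ge> 2"
  shows "(1 / real m) * (\<Sum>j\<in>b ` {..<n}. \<Sum>i\<in>{i. i < n \<and> b i = j}. p i * s i)
           > lam * (1 - pmax) / (2 * real (k + 1))"
proof -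
  define v where "v = (\<lambda>i. (1 / lam) * ln (1 / (1 - p i)))"
  define c where "c = lam * (1 - pmax) / real (k+1)"
  define B where "B = b ` {..<n}"
  define L where "L = (\<lambda>j. \<Sum>i\<in>{i. i < n \<and> b i = j}. v i)"
  have c0: "c > 0" unfolding c_def using assms(3,4) by simp
  have nn: "\<And>i. i < n \<Longrightarrow> 0 \<le> v i" unfolding v_def
  proof -
    fix i assume "i < n"
    thus "0 \<le> 1 / lam * ln (1 / (1 - p i))"
      using assms(6)[OF \<open>i < n\<close>] assms(5)[OF \<open>i < n\<close>] assms(3,4)
      by (intro item_bound(2)[of lam "p i" pmax k "s i"]) auto
  qed
  have ib: "\<And>i. i < n \<Longrightarrow> c * v i \<le> p i * s i" unfolding v_def c_def
  proof -
    fix i assume "i < n"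
    thus "lam * (1 - pmax) / real (k + 1) * (1 / lam * ln (1 / (1 - p i))) \<le> p i * s i"
      using assms(6)[OF \<open>i < n\<close>] assms(5)[OF \<open>i < n\<close>] assms(3,4)
      by (intro item_bound(1)[of lam "p i" pmax k "s i"]) auto
  qed
  have af: "any_fit n v b" using assms(8) unfolding v_def .
  have fin: "finite B" unfolding B_def by simp
  have mB: "card B = m" using assms(9) B_def by simp
  have pb: "\<And>j j'. j \<in> B \<Longrightarrow> j' \<in> B \<Longrightarrow> j \<noteq> j' \<Longrightarrow> L j + L j' > 1"
    unfolding B_def L_def by (rule pair_bound2[OF af nn])
  have half: "2 * (\<Sum>j\<in>B. L j) > real m"
    using sum_half[OF fin, of L, OF _ pb] assms(10) mB by simp
  have "c * (\<Sum>j\<in>B. L j) \<le> (\<Sum>j\<in>B. \<Sum>i\<in>{i. i < n \<and> b i = j}. p i * s i)"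
    unfolding L_def sum_distrib_left
    by (intro sum_mono) (use ib in auto)
  moreover have "c * real m / 2 < c * (\<Sum>j\<in>B. L j)" using half c0 by simp
  ultimately have T: "c * real m / 2 < (\<Sum>j\<in>B. \<Sum>i\<in>{i. i < n \<and> b i = j}. p i * s i)" by linarith
  have mpos: "real m > 0" using assms(10) by simp
  have "lam * (1 - pmax) / (2 * real (k + 1)) = (1 / real m) * (c * real m / 2)"
  proof -
    have "(1 / real m) * (c * real m / 2) = c / 2" using mpos by simp
    thus ?thesis unfolding c_def by simp
  qed
  also have "\<dots> < (1 / real m) * (\<Sum>j\<in>B. \<Sum>i\<in>{i. i < n \<and> b i = j}. p i * s i)"
    using T mpos by (intro mult_strict_left_mono) auto
  finally show ?thesis unfolding B_def .
qed

end
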